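(* Let $\mathcal M=(X,(U_x)_{x\in X})$ be a local Moufang set with little projective group $G$. If $x,y\in X$ satisfy $x\not\sim y$, then $\langle U_x,U_y\rangle = G$.
   Context: Group actions are right actions, written $xg$; conjugation is $g^h=h^{-1}gh$. For a set $X$ with an equivalence relation $\sim$, $\overline{x}$ denotes the class of $x$, $\overline X$ the set of classes, and $\mathrm{Sym}(X,\sim)$ the group of bijections $g$ of $X$ with $x\sim y\iff xg\sim yg$; each such $g$ induces a permutation $\overline g$ of $\overline X$, and for a subgroup $U\le \mathrm{Sym}(X,\sim)$, $\overline U$ is the induced group of permutations of $\overline X$. A local Moufang set consists of a set with equivalence relation $(X,\sim)$ with $|\overline X|>2$ and, for each $x\in X$, a subgroup (root group) $U_x\le\mathrm{Sym}(X,\sim)$ such that: (LM0) if $x\sim y$ then $\overline{U_x}=\overline{U_y}$; (LM1) $U_x$ fixes $x$ and acts sharply transitively on $X\setminus\overline x$; (LM1') $\overline{U_x}$ fixes $\overline x$ and acts sharply transitively on $\overline X\setminus\{\overline x\}$; (LM2) $U_x^g=U_{xg}$ for all $x\in X$ and all $g$ in the little projective group $G:=\langle U_x\mid x\in X\rangle$. *)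

theory Defs
  imports "HOL-Algebra.Bij" "HOL-Algebra.Generated_Groups"
begin

text \<open>Permutations of X are represented by the extensional bijections of the
HOL-Algebra group BijGroup X; the image of a point a under g is g a.\<close>

definition SymEq :: "'a set \<Rightarrow> 'a rel \<Rightarrow> ('a \<Rightarrow> 'a) set" where
  "SymEq X r = {g \<in> Bij X. \<forall>a\<in>X. \<forall>b\<in>X. (a, b) \<in> r \<longleftrightarrow> (g a, g b) \<in> r}"

definition induced :: "'a set \<Rightarrow> 'a rel \<Rightarrow> ('a \<Rightarrow> 'a) \<Rightarrow> ('a set \<Rightarrow> 'a set)" where
  "induced X r g = (\<lambda>C \<in> X // r. g ` C)"

definition little_group :: "'a set \<Rightarrow> ('a \<Rightarrow> ('a \<Rightarrow> 'a) set) \<Rightarrow> ('a \<Rightarrow> 'a) set" where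
  "little_group X U = generate (BijGroup X) (\<Union>x\<in>X. U x)"

definition local_moufang_set ::
  "'a set \<Rightarrow> 'a rel \<Rightarrow> ('a \<Rightarrow> ('a \<Rightarrow> 'a) set) \<Rightarrow> bool" where
  "local_moufang_set X r U \<longleftrightarrow>
     equiv X r \<and>
     (infinite (X // r) \<or> 2 < card (X // r)) \<and>
     (\<forall>x\<in>X. subgroup (U x) (BijGroup X) \<and> U x \<subseteq> SymEq X r) \<and>
     \<comment> \<open>LM0\<close>
     (\<forall>x\<in>X. \<forall>y\<in>X. (x, y) \<in> r \<longrightarrow> induced X r ` U x = induced X r ` U y) \<and>
     \<comment> \<open>LM1\<close>
     (\<forall>x\<in>X. (\<forall>u\<in>U x. u x = x \<and> u ` (X - r `` {x}) = X - r `` {x}) \<and>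
        (\<forall>y\<in>X - r `` {x}. \<forall>z\<in>X - r `` {x}. \<exists>!u. u \<in> U x \<and> u y = z)) \<and>
     \<comment> \<open>LM1'\<close>
     (\<forall>x\<in>X. (\<forall>u\<in>U x. induced X r u (r `` {x}) = r `` {x}) \<and>
        (\<forall>C\<in>X // r - {r `` {x}}. \<forall>D\<in>X // r - {r `` {x}}.
            \<exists>!p. p \<in> induced X r ` U x \<and> p C = D)) \<and>
     \<comment> \<open>LM2: U_x^g = g^-1 U_x g (right actions) equals U_{xg}\<close>
     (\<forall>g\<in>little_group X U. \<forall>x\<in>X.
        U (g x) = (\<lambda>u. g \<otimes>\<^bsub>BijGroup X\<^esub> u \<otimes>\<^bsub>BijGroup X\<^esub> inv\<^bsub>BijGroup X\<^esub> g) ` U x)"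

end

theory Submission
  imports Defs
begin

theorem mainTheorem1:
  assumes "local_moufang_set X r U"
    and "x \<in> X" and "y \<in> X" and "(x, y) \<notin> r"
  shows "generate (BijGroup X) (U x \<union> U y) = little_group X U"
proof -
  let ?G = "BijGroup X"
  interpret G: group ?G by (rule group_BijGroup)
  note A = assms(1)[unfolded local_moufang_set_def]
  have eq: "equiv X r" using A by (rule conjunct1)
  have sgall: "\<forall>x\<in>X. subgroup (U x) (BijGroup X) \<and> U x \<subseteq> SymEq X r"
    using A by (elim conjE)
  have sg: "\<And>z. z \<in> X \<Longrightarrow> subgroup (U z) ?G" using sgall by simp
  have Uc: "\<And>z. z \<in> X \<Longrightarrow> U z \<subseteq> carrier ?G" using sg subgroup.subset by blast
  have lm1all: "\<forall>x\<in>X. (\<forall>u\<in>U x. u x = x \<and> u ` (X - r `` {x}) = X - r `` {x}) \<and>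
        (\<forall>y\<in>X - r `` {x}. \<forall>z\<in>X - r `` {x}. \<exists>!u. u \<in> U x \<and> u y = z)"
    using A by (elim conjE)
  have lm1: "\<And>z a b. z \<in> X \<Longrightarrow> a \<in> X - r `` {z} \<Longrightarrow> b \<in> X - r `` {z} \<Longrightarrow> \<exists>u. u \<in> U z \<and> u a = b"
  proof -
    fix z a b assume h: "z \<in> X" "a \<in> X - r `` {z}" "b \<in> X - r `` {z}"
    then have "\<exists>!u. u \<in> U z \<and> u a = b" using lm1all by blast
    then show "\<exists>u. u \<in> U z \<and> u a = b" by (rule ex1_implies_ex)
  qed
  have lm2all: "\<forall>g\<in>little_group X U. \<forall>x\<in>X.
        U (g x) = (\<lambda>u. g \<otimes>\<^bsub>BijGroup X\<^esub> u \<otimes>\<^bsub>BijGroup X\<^esub> inv\<^bsub>BijGroup X\<^esub> g) ` U x"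
    using A by (elim conjE)
  have lm2: "\<And>g z. g \<in> little_group X U \<Longrightarrow> z \<in> X \<Longrightarrow>
      U (g z) = (\<lambda>u. g \<otimes>\<^bsub>?G\<^esub> u \<otimes>\<^bsub>?G\<^esub> inv\<^bsub>?G\<^esub> g) ` U z"
    using lm2all by blast
  let ?H = "generate ?G (U x \<union> U y)"
  have Hs: "subgroup ?H ?G" using Uc assms(2,3) by (intro G.generate_is_subgroup) auto
  have UH: "U x \<subseteq> ?H" "U y \<subseteq> ?H" by (auto intro: generate.incl)
  have conj: "U (g w) \<subseteq> ?H" if "g \<in> U v" "v \<in> X" "w \<in> X" "U w \<subseteq> ?H" "U v \<subseteq> ?H" for g v w
  proof -
    have gl: "g \<in> little_group X U" unfolding little_group_def
      using that(1,2) generate.incl[of g "\<Union>x\<in>X. U x"] by blast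
    have gH: "g \<in> ?H" using that by blast
    show ?thesis unfolding lm2[OF gl that(3)]
    proof
      fix h assume "h \<in> (\<lambda>u. g \<otimes>\<^bsub>?G\<^esub> u \<otimes>\<^bsub>?G\<^esub> inv\<^bsub>?G\<^esub> g) ` U w"
      then obtain u where u: "u \<in> U w" "h = g \<otimes>\<^bsub>?G\<^esub> u \<otimes>\<^bsub>?G\<^esub> inv\<^bsub>?G\<^esub> g" by blast
      have "u \<in> ?H" using u that(4) by blast
      then show "h \<in> ?H" using u gH Hs
        by (simp add: subgroup.m_closed subgroup.m_inv_closed)
    qed
  qed
  have all: "U z \<subseteq> ?H" if z: "z \<in> X" for z
  proof (cases "(x, z) \<in> r")
    case False
    have "y \<in> X - r `` {x}" "z \<in> X - r `` {x}" using assms(3,4) z False by auto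
    then obtain u where "u \<in> U x" "u y = z" using lm1[OF assms(2)] by blast
    then show ?thesis using conj[of u x y] UH assms by blast
  next
    case True
    have "(y, z) \<notin> r"
    proof
      assume "(y, z) \<in> r"
      then have "(z, y) \<in> r" using eq by (meson equiv_def symD)
      then show False using True assms(4) eq by (meson equiv_def transD)
    qed
    moreover have "(y, x) \<notin> r" using assms(4) eq by (meson equiv_def symD)
    ultimately have "x \<in> X - r `` {y}" "z \<in> X - r `` {y}" using assms(2) z by auto
    then obtain u where "u \<in> U y" "u x = z" using lm1[OF assms(3)] by blast
    then show ?thesis using conj[of u y x] UH assms by blast
  qed
  show ?thesis
  proof
    show "?H \<subseteq> little_group X U" unfolding little_group_def
      using assms(2,3) by (intro G.mono_generate) auto
    show "little_group X U \<subseteq> ?H" unfolding little_group_def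
      using all Hs by (intro G.generate_subgroup_incl) auto
  qed
qed

end
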